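(* Let $X$ be a nonempty set and $f,g:X\to\mathbb{R}$. Then there exists $\lambda\in[0,1]$ such that \[ 0\leq \lambda f(x)+(1-\lambda)g(x)\qquad (x\in X) \] if and only if \[ 0\leq \max\big(t f(x)+(1-t)f(y),\ t g(x)+(1-t)g(y)\big)\qquad (x,y\in X,\ t\in[0,1]). \] *)

theory Defs
  imports Main "HOL.Real"
begin

end

theory Submission
  imports Defs
begin

lemma pair_key:
  fixes a b c d :: real
  assumes ab: "a > b" and cd: "c < d"
    and H: "\<forall>t\<in>{0..1::real}. 0 \<le> max (t * a + (1 - t) * c) (t * b + (1 - t) * d)"
  shows "- b / (a - b) \<le> d / (d - c)"
proof (rule ccontr)
  assume "\<not> ?thesis"
  hence "d / (d - c) < - b / (a - b)" by simp
  hence "d * (a - b) < - b * (d - c)" using ab cd by (simp add: field_simps)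
  hence neg: "d * a - b * c < 0" by (simp add: algebra_simps)
  define D where "D = (a - b) + (d - c)"
  have Dp: "D > 0" using ab cd by (simp add: D_def)
  define t where "t = (d - c) / D"
  have t01: "t \<in> {0..1}" using ab cd Dp by (simp add: t_def D_def field_simps)
  have omt: "1 - t = (a - b) / D" using Dp by (simp add: t_def D_def field_simps)
  have e1: "t * a + (1 - t) * c = (d * a - b * c) / D"
  proof -
    have "t * a + (1 - t) * c = ((d - c) * a + (a - b) * c) / D"
      by (subst omt, subst t_def, simp add: add_divide_distrib)
    thus ?thesis by (simp add: algebra_simps)
  qed
  have e2: "t * b + (1 - t) * d = (d * a - b * c) / D"
  proof -
    have "t * b + (1 - t) * d = ((d - c) * b + (a - b) * d) / D"
      by (subst omt, subst t_def, simp add: add_divide_distrib)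
    thus ?thesis by (simp add: algebra_simps)
  qed
  have "(d * a - b * c) / D < 0" using neg Dp by (simp add: divide_neg_pos)
  thus False using H t01 e1 e2 by force
qed

theorem corollary2p3:
  fixes X :: "'a set" and f g :: "'a \<Rightarrow> real"
  assumes "X \<noteq> {}"
  shows "(\<exists>l\<in>{0..1::real}. \<forall>x\<in>X. 0 \<le> l * f x + (1 - l) * g x)
     \<longleftrightarrow> (\<forall>x\<in>X. \<forall>y\<in>X. \<forall>t\<in>{0..1::real}.
            0 \<le> max (t * f x + (1 - t) * f y) (t * g x + (1 - t) * g y))"
proof
  assume "\<exists>l\<in>{0..1::real}. \<forall>x\<in>X. 0 \<le> l * f x + (1 - l) * g x"
  then obtain l where l: "l \<in> {0..1}" "\<forall>x\<in>X. 0 \<le> l * f x + (1 - l) * g x" by blast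
  show "\<forall>x\<in>X. \<forall>y\<in>X. \<forall>t\<in>{0..1::real}.
            0 \<le> max (t * f x + (1 - t) * f y) (t * g x + (1 - t) * g y)"
  proof (intro ballI)
    fix x y t assume xy: "x \<in> X" "y \<in> X" and t: "t \<in> {0..1::real}"
    have hx: "0 \<le> l * f x + (1 - l) * g x" and hy: "0 \<le> l * f y + (1 - l) * g y"
      using l xy by auto
    have "0 \<le> t * (l * f x + (1 - l) * g x) + (1 - t) * (l * f y + (1 - l) * g y)"
      using hx hy t by (intro add_nonneg_nonneg) (rule mult_nonneg_nonneg; simp)+
    also have "\<dots> = l * (t * f x + (1 - t) * f y) + (1 - l) * (t * g x + (1 - t) * g y)"
      by (simp add: algebra_simps)
    also have "\<dots> \<le> l * max (t * f x + (1 - t) * f y) (t * g x + (1 - t) * g y)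
        + (1 - l) * max (t * f x + (1 - t) * f y) (t * g x + (1 - t) * g y)"
      using l(1) by (intro add_mono mult_left_mono) auto
    also have "\<dots> = max (t * f x + (1 - t) * f y) (t * g x + (1 - t) * g y)"
      by (simp add: algebra_simps)
    finally show "0 \<le> max (t * f x + (1 - t) * f y) (t * g x + (1 - t) * g y)" .
  qed
next
  assume H: "\<forall>x\<in>X. \<forall>y\<in>X. \<forall>t\<in>{0..1::real}.
            0 \<le> max (t * f x + (1 - t) * f y) (t * g x + (1 - t) * g y)"
  have mx: "0 \<le> max (f x) (g x)" if "x \<in> X" for x
    using H that by (metis atLeastAtMost_iff diff_add_cancel le_numeral_extra(1,4)
        mult_1 add_0_right mult_zero_left diff_self)
  define A where "A = {- g x / (f x - g x) | x. x \<in> X \<and> f x > g x}"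
  define l where "l = Sup (insert 0 A)"
  have Ale1: "a \<le> 1" if aA: "a \<in> A" for a
  proof -
    obtain x where x: "x \<in> X" "f x > g x" "a = - g x / (f x - g x)" using aA unfolding A_def by blast
    have "0 \<le> f x" using mx[OF x(1)] x(2) by simp
    have "a * (f x - g x) = - g x" using x by (simp add: field_simps)
    hence "a * (f x - g x) \<le> 1 * (f x - g x)" using \<open>0 \<le> f x\<close> by simp
    thus ?thesis using x(2) by (simp add: mult_right_le_imp_le)
  qed
  have bdd: "bdd_above (insert 0 A)" using Ale1 by (intro bdd_aboveI[of _ 1]) auto
  have l0: "0 \<le> l" unfolding l_def using bdd by (intro cSup_upper) auto
  have lA: "a \<le> l" if "a \<in> A" for a unfolding l_def using bdd that by (intro cSup_upper) auto
  have l1: "l \<le> 1" unfolding l_def using Ale1 by (intro cSup_least) auto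
  have lb: "l \<le> g y / (g y - f y)" if y: "y \<in> X" "f y < g y" for y
    unfolding l_def
  proof (intro cSup_least)
    fix a assume "a \<in> insert 0 A"
    then show "a \<le> g y / (g y - f y)"
    proof
      assume "a = 0" thus ?thesis using mx[OF y(1)] y(2) by simp
    next
      assume "a \<in> A"
      then obtain x where x: "x \<in> X" "f x > g x" "a = - g x / (f x - g x)" unfolding A_def by blast
      show ?thesis using pair_key[OF x(2) y(2)] H x y by auto
    qed
  qed auto
  show "\<exists>l\<in>{0..1::real}. \<forall>x\<in>X. 0 \<le> l * f x + (1 - l) * g x"
  proof (intro bexI[of _ l] ballI)
    show "l \<in> {0..1}" using l0 l1 by simp
    fix x assume x: "x \<in> X"
    consider "f x > g x" | "f x < g x" | "f x = g x" by linarith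
    then show "0 \<le> l * f x + (1 - l) * g x"
    proof cases
      case 1
      have "- g x / (f x - g x) \<le> l" using lA A_def x 1 by auto
      hence "- g x \<le> l * (f x - g x)" using 1 by (simp add: field_simps)
      thus ?thesis by (simp add: algebra_simps)
    next
      case 2
      have "l \<le> g x / (g x - f x)" using lb x 2 by auto
      hence "l * (g x - f x) \<le> g x" using 2 by (simp add: field_simps)
      thus ?thesis by (simp add: algebra_simps)
    next
      case 3
      thus ?thesis using mx[OF x] by (simp add: algebra_simps)
    qed
  qed
qed

end
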